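(* The one-dimensional subalgebras of ${\rm S}_2$ are exactly $\langle e_1\rangle$, $\langle e_2\rangle$ and $\langle e_1+\alpha e_2\pm e_3\rangle$ ($\alpha\in\mathbb{C}$). Up to automorphisms of ${\rm S}_2$, every one-dimensional subalgebra is equivalent to one of $\langle e_1\rangle$, $\langle e_2\rangle$, $\langle e_1+e_3\rangle$, $\langle e_1-e_3\rangle$.
   Context: ${\rm S}_2$ is the complex algebra with basis $e_1,e_2,e_3$, unit $e_1$ ($e_1e_i=e_ie_1=e_i$), $e_2e_3=e_2$, $e_3e_2=-e_2$, $e_3e_3=e_1$; all other products of basis elements are zero (involution $\overline{e_1}=e_1$, $\overline{e_2}=-e_2$, $\overline{e_3}=-e_3$, which plays no role here). A subalgebra is a linear subspace closed under multiplication (it need not contain $e_1$). Equivalence up to automorphisms means one is mapped onto the other by an algebra automorphism. $\langle S\rangle$ denotes linear span. *)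

theory Defs
  imports Complex_Main
begin

text \<open>Elements of S2 are coordinate triples (a,b,c) = a e1 + b e2 + c e3 over the complex numbers.\<close>

type_synonym S2 = "complex \<times> complex \<times> complex"

definition e1 :: S2 where "e1 = (1, 0, 0)"
definition e2 :: S2 where "e2 = (0, 1, 0)"
definition e3 :: S2 where "e3 = (0, 0, 1)"

definition s2add :: "S2 \<Rightarrow> S2 \<Rightarrow> S2" where
  "s2add x y = (fst x + fst y, fst (snd x) + fst (snd y), snd (snd x) + snd (snd y))"

definition s2scale :: "complex \<Rightarrow> S2 \<Rightarrow> S2" where
  "s2scale c x = (c * fst x, c * fst (snd x), c * snd (snd x))"

text \<open>Bilinear extension of the multiplication table:
  e1 unit, e2 e3 = e2, e3 e2 = -e2, e3 e3 = e1, all other products zero.\<close>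
definition s2mult :: "S2 \<Rightarrow> S2 \<Rightarrow> S2" where
  "s2mult x y = (let (a1, a2, a3) = x; (b1, b2, b3) = y in
     (a1 * b1 + a3 * b3,
      a1 * b2 + a2 * b1 + a2 * b3 - a3 * b2,
      a1 * b3 + a3 * b1))"

definition s2subspace :: "S2 set \<Rightarrow> bool" where
  "s2subspace V \<longleftrightarrow> (0, 0, 0) \<in> V \<and> (\<forall>x\<in>V. \<forall>y\<in>V. s2add x y \<in> V)
      \<and> (\<forall>c. \<forall>x\<in>V. s2scale c x \<in> V)"

definition s2subalgebra :: "S2 set \<Rightarrow> bool" where
  "s2subalgebra V \<longleftrightarrow> s2subspace V \<and> (\<forall>x\<in>V. \<forall>y\<in>V. s2mult x y \<in> V)"

definition s2span1 :: "S2 \<Rightarrow> S2 set" where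
  "s2span1 v = {s2scale c v | c. True}"

definition s2dim1 :: "S2 set \<Rightarrow> bool" where
  "s2dim1 V \<longleftrightarrow> (\<exists>v. v \<noteq> (0, 0, 0) \<and> V = s2span1 v)"

definition s2automorphism :: "(S2 \<Rightarrow> S2) \<Rightarrow> bool" where
  "s2automorphism f \<longleftrightarrow> bij f
     \<and> (\<forall>x y. f (s2add x y) = s2add (f x) (f y))
     \<and> (\<forall>c x. f (s2scale c x) = s2scale c (f x))
     \<and> (\<forall>x y. f (s2mult x y) = s2mult (f x) (f y))"

end

theory Submission
  imports Defs
begin

lemma span_mem: "x \<in> s2span1 v \<longleftrightarrow> (\<exists>c. x = s2scale c v)"
  by (auto simp: s2span1_def)

lemma scale_scale: "s2scale c (s2scale k v) = s2scale (c*k) v"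
  by (simp add: s2scale_def mult.assoc)

lemma span_eq:
  assumes "k \<noteq> 0" shows "s2span1 (s2scale k v) = s2span1 v"
proof
  show "s2span1 (s2scale k v) \<subseteq> s2span1 v"
    by (auto simp: span_mem scale_scale)
  show "s2span1 v \<subseteq> s2span1 (s2scale k v)"
  proof
    fix x assume "x \<in> s2span1 v"
    then obtain c where "x = s2scale c v" by (auto simp: span_mem)
    hence "x = s2scale (c/k) (s2scale k v)" using assms by (simp add: scale_scale)
    thus "x \<in> s2span1 (s2scale k v)" by (auto simp: span_mem)
  qed
qed

lemma span_sub:
  assumes "s2mult w w = s2scale \<mu> w"
  shows "s2subalgebra (s2span1 w)"
proof -
  have z: "(0,0,0) \<in> s2span1 w"
    unfolding span_mem by (rule exI[of _ 0]) (simp add: s2scale_def)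
  have a: "s2add (s2scale c w) (s2scale d w) = s2scale (c+d) w" for c d
    by (simp add: s2add_def s2scale_def distrib_right)
  have m: "s2mult (s2scale c w) (s2scale d w) = s2scale (c*d) (s2mult w w)" for c d
    by (cases w) (simp add: s2mult_def s2scale_def algebra_simps)
  show ?thesis
    unfolding s2subalgebra_def s2subspace_def
    using z by (auto simp: span_mem a m scale_scale assms) blast+
qed

lemma classify:
  assumes "v \<noteq> (0,0,0)" "s2mult v v = s2scale l v"
  shows "\<exists>k. k \<noteq> 0 \<and> (v = s2scale k e1 \<or> v = s2scale k e2 \<or>
     (\<exists>\<alpha>. v = s2scale k (s2add (s2add e1 (s2scale \<alpha> e2)) e3)
        \<or> v = s2scale k (s2add (s2add e1 (s2scale \<alpha> e2)) (s2scale (-1) e3))))"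
proof -
  obtain a b c where v: "v = (a,b,c)" by (cases v) auto
  have h1: "a*a + c*c = l*a" and h2: "2*a*b = l*b" and h3: "2*a*c = l*c"
    using assms(2) by (auto simp: v s2mult_def s2scale_def algebra_simps)
  have nz: "a \<noteq> 0 \<or> b \<noteq> 0 \<or> c \<noteq> 0" using assms(1) v by auto
  show ?thesis
  proof (cases "a = 0")
    case True
    hence "c = 0" using h1 by simp
    hence "b \<noteq> 0" using nz True by simp
    have "v = s2scale b e2" using True \<open>c = 0\<close> by (simp add: v s2scale_def e2_def)
    thus ?thesis using \<open>b \<noteq> 0\<close> by blast
  next
    case False
    show ?thesis
    proof (cases "c = 0")
      case True
      hence "l = a" using h1 False by simp
      hence "a*b = 0" using h2 by (simp add: algebra_simps)
      hence "b = 0" using False by simp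
      have "v = s2scale a e1" using True \<open>b = 0\<close> by (simp add: v s2scale_def e1_def)
      thus ?thesis using False by blast
    next
      case c0: False
      hence "l = 2*a" using h3 by simp
      hence "c*c = a*a" using h1 by (simp add: algebra_simps)
      hence "(c - a) * (c + a) = 0" by (simp add: algebra_simps)
      hence "c = a \<or> c = -a" by (simp add: eq_neg_iff_add_eq_0)
      thus ?thesis
      proof
        assume "c = a"
        hence "v = s2scale a (s2add (s2add e1 (s2scale (b/a) e2)) e3)"
          using False by (simp add: v s2scale_def s2add_def e1_def e2_def e3_def)
        thus ?thesis using False by blast
      next
        assume "c = -a"
        hence "v = s2scale a (s2add (s2add e1 (s2scale (b/a) e2)) (s2scale (-1) e3))"
          using False by (simp add: v s2scale_def s2add_def e1_def e2_def e3_def)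
        thus ?thesis using False by blast
      qed
    qed
  qed
qed

definition fb :: "complex \<Rightarrow> S2 \<Rightarrow> S2" where
  "fb \<beta> x = (fst x, fst (snd x) + \<beta> * snd (snd x), snd (snd x))"

lemma fb_auto: "s2automorphism (fb \<beta>)"
proof -
  have inv: "fb (-\<beta>) (fb \<beta> x) = x" "fb \<beta> (fb (-\<beta>) x) = x" for x
    by (auto simp: fb_def)
  have "bij (fb \<beta>)"
    by (rule o_bij[where g="fb (-\<beta>)"]) (auto simp: fun_eq_iff inv)
  moreover have "fb \<beta> (s2add x y) = s2add (fb \<beta> x) (fb \<beta> y)" for x y
    by (simp add: fb_def s2add_def algebra_simps)
  moreover have "fb \<beta> (s2scale c x) = s2scale c (fb \<beta> x)" for c x
    by (simp add: fb_def s2scale_def algebra_simps)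
  moreover have "fb \<beta> (s2mult x y) = s2mult (fb \<beta> x) (fb \<beta> y)" for x y
    by (cases x, cases y) (simp add: fb_def s2mult_def algebra_simps)
  ultimately show ?thesis unfolding s2automorphism_def by blast
qed

lemma img_span:
  assumes "\<And>c x. f (s2scale c x) = s2scale c (f x)"
  shows "f ` s2span1 v = s2span1 (f v)"
proof -
  have "f ` s2span1 v = (\<lambda>c. f (s2scale c v)) ` UNIV" by (auto simp: s2span1_def)
  also have "\<dots> = (\<lambda>c. s2scale c (f v)) ` UNIV" by (simp add: assms)
  also have "\<dots> = s2span1 (f v)" by (auto simp: s2span1_def)
  finally show ?thesis .
qed

lemma dim1: "w \<noteq> (0,0,0) \<Longrightarrow> s2dim1 (s2span1 w)"
  unfolding s2dim1_def by blast

lemma id_auto: "s2automorphism id"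
  by (simp add: s2automorphism_def)

theorem mainTheorem16:
  shows "(\<forall>V. (s2subalgebra V \<and> s2dim1 V) \<longleftrightarrow>
            (V = s2span1 e1 \<or> V = s2span1 e2 \<or>
             (\<exists>\<alpha>. V = s2span1 (s2add (s2add e1 (s2scale \<alpha> e2)) e3)
                 \<or> V = s2span1 (s2add (s2add e1 (s2scale \<alpha> e2)) (s2scale (-1) e3)))))
       \<and> (\<forall>V. s2subalgebra V \<and> s2dim1 V \<longrightarrow>
            (\<exists>f. s2automorphism f \<and>
               (f ` V = s2span1 e1 \<or> f ` V = s2span1 e2 \<or>
                f ` V = s2span1 (s2add e1 e3) \<or> f ` V = s2span1 (s2add e1 (s2scale (-1) e3)))))"
proof -
  have part1: "(s2subalgebra V \<and> s2dim1 V) \<longleftrightarrow>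
            (V = s2span1 e1 \<or> V = s2span1 e2 \<or>
             (\<exists>\<alpha>. V = s2span1 (s2add (s2add e1 (s2scale \<alpha> e2)) e3)
                 \<or> V = s2span1 (s2add (s2add e1 (s2scale \<alpha> e2)) (s2scale (-1) e3))))" for V
  proof
    assume H: "s2subalgebra V \<and> s2dim1 V"
    then obtain v where v: "v \<noteq> (0,0,0)" "V = s2span1 v" by (auto simp: s2dim1_def)
    have "v \<in> V" unfolding v span_mem by (rule exI[of _ 1]) (simp add: s2scale_def)
    hence "s2mult v v \<in> V" using H by (auto simp: s2subalgebra_def)
    then obtain l where "s2mult v v = s2scale l v" using v by (auto simp: span_mem)
    from classify[OF v(1) this] obtain k where "k \<noteq> 0" and
      "v = s2scale k e1 \<or> v = s2scale k e2 \<or>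
     (\<exists>\<alpha>. v = s2scale k (s2add (s2add e1 (s2scale \<alpha> e2)) e3)
        \<or> v = s2scale k (s2add (s2add e1 (s2scale \<alpha> e2)) (s2scale (-1) e3)))" by blast
    thus "V = s2span1 e1 \<or> V = s2span1 e2 \<or>
             (\<exists>\<alpha>. V = s2span1 (s2add (s2add e1 (s2scale \<alpha> e2)) e3)
                 \<or> V = s2span1 (s2add (s2add e1 (s2scale \<alpha> e2)) (s2scale (-1) e3)))"
      using v(2) span_eq by metis
  next
    assume "V = s2span1 e1 \<or> V = s2span1 e2 \<or>
             (\<exists>\<alpha>. V = s2span1 (s2add (s2add e1 (s2scale \<alpha> e2)) e3)
                 \<or> V = s2span1 (s2add (s2add e1 (s2scale \<alpha> e2)) (s2scale (-1) e3)))"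
    then show "s2subalgebra V \<and> s2dim1 V"
    proof (elim disjE exE)
      assume "V = s2span1 e1" thus ?thesis
        using span_sub[of e1 1] dim1[of e1] by (auto simp: e1_def s2mult_def s2scale_def)
    next
      assume "V = s2span1 e2" thus ?thesis
        using span_sub[of e2 0] dim1[of e2] by (auto simp: e2_def s2mult_def s2scale_def)
    next
      fix \<alpha> assume "V = s2span1 (s2add (s2add e1 (s2scale \<alpha> e2)) e3)" thus ?thesis
        using span_sub[of "s2add (s2add e1 (s2scale \<alpha> e2)) e3" 2] dim1[of "s2add (s2add e1 (s2scale \<alpha> e2)) e3"]
        by (auto simp: e1_def e2_def e3_def s2add_def s2mult_def s2scale_def)
    next
      fix \<alpha> assume "V = s2span1 (s2add (s2add e1 (s2scale \<alpha> e2)) (s2scale (-1) e3))" thus ?thesis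
        using span_sub[of "s2add (s2add e1 (s2scale \<alpha> e2)) (s2scale (-1) e3)" 2] dim1[of "s2add (s2add e1 (s2scale \<alpha> e2)) (s2scale (-1) e3)"]
        by (auto simp: e1_def e2_def e3_def s2add_def s2mult_def s2scale_def)
    qed
  qed
  have part2: "\<exists>f. s2automorphism f \<and>
               (f ` V = s2span1 e1 \<or> f ` V = s2span1 e2 \<or>
                f ` V = s2span1 (s2add e1 e3) \<or> f ` V = s2span1 (s2add e1 (s2scale (-1) e3)))"
    if "s2subalgebra V \<and> s2dim1 V" for V
  proof -
    have sc: "fb \<beta> (s2scale c x) = s2scale c (fb \<beta> x)" for \<beta> c x
      by (simp add: fb_def s2scale_def algebra_simps)
    from that part1[of V] have "V = s2span1 e1 \<or> V = s2span1 e2 \<or>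
             (\<exists>\<alpha>. V = s2span1 (s2add (s2add e1 (s2scale \<alpha> e2)) e3)
                 \<or> V = s2span1 (s2add (s2add e1 (s2scale \<alpha> e2)) (s2scale (-1) e3)))" by blast
    then show ?thesis
    proof (elim disjE exE)
      assume "V = s2span1 e1" thus ?thesis using id_auto image_id by (metis id_apply)
    next
      assume "V = s2span1 e2" thus ?thesis using id_auto image_id by (metis id_apply)
    next
      fix \<alpha> assume V: "V = s2span1 (s2add (s2add e1 (s2scale \<alpha> e2)) e3)"
      have "fb (-\<alpha>) ` V = s2span1 (s2add e1 e3)"
        unfolding V img_span[OF sc]
        by (simp add: fb_def e1_def e2_def e3_def s2add_def s2scale_def)
      thus ?thesis using fb_auto by blast
    next
      fix \<alpha> assume V: "V = s2span1 (s2add (s2add e1 (s2scale \<alpha> e2)) (s2scale (-1) e3))"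
      have "fb \<alpha> ` V = s2span1 (s2add e1 (s2scale (-1) e3))"
        unfolding V img_span[OF sc]
        by (simp add: fb_def e1_def e2_def e3_def s2add_def s2scale_def)
      thus ?thesis using fb_auto by blast
    qed
  qed
  show ?thesis using part1 part2 by blast
qed

end
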